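(* Let $\mathbf{a}=\langle a_1,\dots,a_s\rangle$ and $\mathbf{b}=\langle b_1,\dots,b_t\rangle$ be integer vectors with $a_1+\cdots+a_s=b_1+\cdots+b_t$, and let $n,m$ be positive integers. Let $r+1=\max(s,n+t)$ and \[\delta=a_1\varepsilon_1+\cdots+a_s\varepsilon_s-(b_1\varepsilon_{n+1}+\cdots+b_t\varepsilon_{n+t})\in\mathbb{Z}^{r+1}.\] Let $\Lambda=\{\varepsilon_i-\varepsilon_j:1\le i<j\le r+1,\ i\le n\}\subseteq\Phi^+_{A_r}$ and \[Q_\Lambda(\delta)=\Big\{p\in P_\Lambda(\delta):\ a_j+\#\{\text{elements of }p\text{ of the form }\varepsilon_i-\varepsilon_j\}\le m\ \text{for all } j\ge1\Big\},\] where $a_j=0$ for $j>s$ and elements of $p$ are counted with multiplicity. Then the map sending a juggling sequence to the multiset of roots $\varepsilon_i-\varepsilon_{i+j}$ (one per throw at time $i$ to height $j$) is a bijection from $\mathrm{JS}(\mathbf{a},\mathbf{b},n,m)$ onto $Q_\Lambda(\delta)$; hence $\mathsf{js}(\mathbf{a},\mathbf{b},n,m)=|Q_\Lambda(\delta)|$. Moreover, without hand capacity constraint, $\mathsf{js}(\mathbf{a},\mathbf{b},n)=K_\Lambda(\delta)$.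
   Context: A juggling state is a finitely supported integer vector $\mathbf{s}=\langle s_1,s_2,\dots\rangle$ indexed by heights (trailing zeros omitted; negative entries are magic balls). A juggling sequence of length $n$ from $\mathbf{a}$ to $\mathbf{b}$ is a sequence $(\mathbf{s}_0,\dots,\mathbf{s}_n)$ with $\mathbf{s}_0=\mathbf{a}$, $\mathbf{s}_n=\mathbf{b}$, such that for each $1\le i\le n$ there are nonnegative integers $c^{(i)}_k$ (finitely many nonzero) with $\sum_k c^{(i)}_k=(\mathbf{s}_{i-1})_1$ and $(\mathbf{s}_i)_k=(\mathbf{s}_{i-1})_{k+1}+c^{(i)}_k$ for all $k\ge1$; $c^{(i)}_j$ is the number of throws at time $i$ to height $j$. It has hand capacity $m$ if all entries of all $\mathbf{s}_i$ are $\le m$. $\mathrm{JS}(\mathbf{a},\mathbf{b},n,m)$ is the set of such sequences with hand capacity $m$, $\mathsf{js}(\mathbf{a},\mathbf{b},n,m)$ its cardinality; $\mathrm{JS}(\mathbf{a},\mathbf{b},n)$, $\mathsf{js}(\mathbf{a},\mathbf{b},n)$ are the same without hand capacity constraint. $\Phi^+_{A_r}=\{\varepsilon_i-\varepsilon_j:1\le i<j\le r+1\}\subset\mathbb{R}^{r+1}$; for $\Lambda\subseteq\Phi^+_{A_r}$, $P_\Lambda(\mu)$ is the set of finite multisets of elements of $\Lambda$ summing to $\mu$, and $K_\Lambda(\mu)=|P_\Lambda(\mu)|$. *)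

theory Defs
  imports Main "HOL-Library.Multiset"
begin

text \<open>Juggling states are functions nat => int indexed by heights 1,2,...;
  the value at index 0 is required to be 0, and the support must be finite.\<close>

definition juggling_state :: "(nat \<Rightarrow> int) \<Rightarrow> bool" where
  "juggling_state s \<longleftrightarrow> s 0 = 0 \<and> finite {k. s k \<noteq> 0}"

definition vec_state :: "int list \<Rightarrow> nat \<Rightarrow> int" where
  "vec_state v k = (if 1 \<le> k \<and> k \<le> length v then v ! (k - 1) else 0)"

text \<open>One step s -> s': throws c_k (c_k = number of throws to height k).\<close>
definition js_step :: "(nat \<Rightarrow> int) \<Rightarrow> (nat \<Rightarrow> int) \<Rightarrow> bool" where
  "js_step s s' \<longleftrightarrow> (\<exists>c :: nat \<Rightarrow> nat. c 0 = 0 \<and> finite {k. c k \<noteq> 0} \<and>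
      int (\<Sum>k\<in>{k. c k \<noteq> 0}. c k) = s 1 \<and>
      (\<forall>k\<ge>1. s' k = s (k + 1) + int (c k)))"

definition JS_nocap :: "int list \<Rightarrow> int list \<Rightarrow> nat \<Rightarrow> (nat \<Rightarrow> int) list set" where
  "JS_nocap a b n = {ss. length ss = n + 1 \<and> (\<forall>i\<le>n. juggling_state (ss ! i)) \<and>
      ss ! 0 = vec_state a \<and> ss ! n = vec_state b \<and>
      (\<forall>i<n. js_step (ss ! i) (ss ! Suc i))}"

definition JS :: "int list \<Rightarrow> int list \<Rightarrow> nat \<Rightarrow> nat \<Rightarrow> (nat \<Rightarrow> int) list set" where
  "JS a b n m = {ss \<in> JS_nocap a b n. \<forall>i\<le>n. \<forall>k. (ss ! i) k \<le> int m}"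

definition js :: "int list \<Rightarrow> int list \<Rightarrow> nat \<Rightarrow> nat \<Rightarrow> nat" where
  "js a b n m = card (JS a b n m)"

definition js_nocap :: "int list \<Rightarrow> int list \<Rightarrow> nat \<Rightarrow> nat" where
  "js_nocap a b n = card (JS_nocap a b n)"

definition throws :: "(nat \<Rightarrow> int) list \<Rightarrow> nat \<Rightarrow> nat \<Rightarrow> nat" where
  "throws ss i j = nat ((ss ! i) j - (ss ! (i - 1)) (j + 1))"

text \<open>Positive roots eps_i - eps_j (i < j) are represented by pairs (i, j).
  The map sending a juggling sequence to its multiset of roots
  eps_i - eps_(i+j), one per throw at time i to height j.\<close>
definition root_map :: "nat \<Rightarrow> (nat \<Rightarrow> int) list \<Rightarrow> (nat \<times> nat) multiset" where
  "root_map n ss = (\<Sum>i\<in>{1..n}. \<Sum>j\<in>{j. 1 \<le> j \<and> throws ss i j \<noteq> 0}.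
                       (replicate_mset (throws ss i j) (i, i + j) :: (nat \<times> nat) multiset))"

definition root_sum :: "(nat \<times> nat) multiset \<Rightarrow> nat \<Rightarrow> int" where
  "root_sum p k = int (size (filter_mset (\<lambda>x. fst x = k) p))
                - int (size (filter_mset (\<lambda>x. snd x = k) p))"

definition P_set :: "(nat \<times> nat) set \<Rightarrow> (nat \<Rightarrow> int) \<Rightarrow> (nat \<times> nat) multiset set" where
  "P_set L mu = {p. set_mset p \<subseteq> L \<and> root_sum p = mu}"

definition K_part :: "(nat \<times> nat) set \<Rightarrow> (nat \<Rightarrow> int) \<Rightarrow> nat" where
  "K_part L mu = card (P_set L mu)"

definition rp1 :: "int list \<Rightarrow> int list \<Rightarrow> nat \<Rightarrow> nat" where
  "rp1 a b n = max (length a) (n + length b)"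

definition Lambda :: "int list \<Rightarrow> int list \<Rightarrow> nat \<Rightarrow> (nat \<times> nat) set" where
  "Lambda a b n = {(i, j). 1 \<le> i \<and> i < j \<and> j \<le> rp1 a b n \<and> i \<le> n}"

definition delta :: "int list \<Rightarrow> int list \<Rightarrow> nat \<Rightarrow> nat \<Rightarrow> int" where
  "delta a b n k = vec_state a k - (if n < k then vec_state b (k - n) else 0)"

definition Q_set :: "int list \<Rightarrow> int list \<Rightarrow> nat \<Rightarrow> nat \<Rightarrow> (nat \<times> nat) multiset set" where
  "Q_set a b n m = {p \<in> P_set (Lambda a b n) (delta a b n).
      \<forall>j\<ge>1. vec_state a j + int (size (filter_mset (\<lambda>x. snd x = j) p)) \<le> int m}"

end

theory Submission
  imports Defs
begin
lemma L_split: "size {#x\<in>#p. fst x \<le> Suc i \<and> snd x = j#} = size {#x\<in>#p. fst x \<le> i \<and> snd x = j#} + count p (Suc i, j)"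
proof -
  have "{#x\<in>#p. fst x \<le> Suc i \<and> snd x = j#} = {#x\<in>#p. fst x \<le> i \<and> snd x = j#} + {#x\<in>#p. x = (Suc i, j)#}"
    by (rule multiset_eqI) (auto simp: le_Suc_eq)
  then show ?thesis by (simp add: filter_eq_replicate_mset)
qed

lemma L_sz: fixes p :: "(nat\<times>nat) multiset" assumes "\<forall>x\<in>#p. fst x < snd x"
  shows "size {#x\<in>#p. fst x = i#} = (\<Sum>j\<in>{j. count p (i,i+j) \<noteq> 0}. count p (i,i+j))"
proof -
  have "size {#x\<in>#p. fst x = i#} = (\<Sum>x\<in>{x\<in>set_mset p. fst x = i}. count p x)"
    by (simp add: size_multiset_overloaded_eq)
  also have "\<dots> = (\<Sum>j\<in>{j. count p (i,i+j) \<noteq> 0}. count p (i,i+j))"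
    apply (rule sum.reindex_bij_witness[where j="\<lambda>x. snd x - i" and i="\<lambda>j. (i,i+j)"])
    using assms by auto
  finally show ?thesis .
qed

lemma L_count:
  assumes "\<forall>i\<in>{1..n}. finite {j. 1 \<le> j \<and> throws ss i j \<noteq> 0}"
  shows "count (root_map n ss) (i,k) = (if 1 \<le> i \<and> i \<le> n \<and> i < k then throws ss i (k - i) else 0)"
proof -
  have inner: "(\<Sum>j\<in>{j. 1 \<le> j \<and> throws ss i' j \<noteq> 0}. count (replicate_mset (throws ss i' j) (i', i'+j)) (i,k))
     = (if i' = i \<and> i < k then throws ss i (k-i) else 0)" if "i' \<in> {1..n}" for i'
  proof -
    let ?S = "{j. 1 \<le> j \<and> throws ss i' j \<noteq> 0}"
    have "(\<Sum>j\<in>?S. count (replicate_mset (throws ss i' j) (i', i'+j)) (i,k))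
      = (\<Sum>j\<in>?S. if j = k - i' then (if i' = i \<and> i < k then throws ss i' j else 0) else 0)"
      by (rule sum.cong) auto
    also have "\<dots> = (if k - i' \<in> ?S then (if i' = i \<and> i < k then throws ss i' (k - i') else 0) else 0)"
      using assms that by (simp add: sum.delta)
    also have "\<dots> = (if i' = i \<and> i < k then throws ss i (k-i) else 0)"
      by auto
    finally show ?thesis .
  qed
  have "count (root_map n ss) (i,k) = (\<Sum>i'\<in>{1..n}. if i' = i \<and> i < k then throws ss i (k-i) else 0)"
    unfolding root_map_def count_sum by (rule sum.cong[OF refl inner])
  also have "\<dots> = (if 1 \<le> i \<and> i \<le> n \<and> i < k then throws ss i (k - i) else 0)"
    by (auto simp: sum.delta)
  finally show ?thesis .
qed

definition Sst :: "int list \<Rightarrow> (nat \<times> nat) multiset \<Rightarrow> nat \<Rightarrow> nat \<Rightarrow> int" where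
  "Sst a p i k = (if k = 0 then 0 else vec_state a (i+k) + int (size {#x \<in># p. fst x \<le> i \<and> snd x = i+k#}))"

definition seqp :: "int list \<Rightarrow> nat \<Rightarrow> (nat \<times> nat) multiset \<Rightarrow> (nat \<Rightarrow> int) list" where
  "seqp a n p = map (Sst a p) [0..<n+1]"

lemma seqp_nth: "i \<le> n \<Longrightarrow> seqp a n p ! i = Sst a p i"
  unfolding seqp_def by (simp del: upt_Suc add: nth_map nth_upt less_Suc_eq_le)

lemma seqp_len: "length (seqp a n p) = n + 1"
  unfolding seqp_def by simp

lemma size_filter_zero: "(\<And>x. x \<in># p \<Longrightarrow> \<not> P x) \<Longrightarrow> size (filter_mset P p) = 0"
  by simp

lemma Sst_split: "k \<ge> 1 \<Longrightarrow> Sst a p (Suc i) k = Sst a p i (k+1) + int (count p (Suc i, Suc i + k))"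
  unfolding Sst_def using L_split[where p=p and i=i and j="Suc i + k"] by simp

lemma P_props:
  assumes "p \<in> P_set (Lambda a b n) (delta a b n)" "x \<in># p"
  shows "1 \<le> fst x \<and> fst x < snd x \<and> snd x \<le> rp1 a b n \<and> fst x \<le> n"
  using assms unfolding P_set_def Lambda_def by auto

lemma P_rs:
  assumes "p \<in> P_set (Lambda a b n) (delta a b n)"
  shows "int (size {#x\<in>#p. fst x = k#}) - int (size {#x\<in>#p. snd x = k#}) = delta a b n k"
proof -
  have "root_sum p = delta a b n" using assms unfolding P_set_def by auto
  then have "root_sum p k = delta a b n k" by simp
  then show ?thesis by (simp add: root_sum_def)
qed

lemma seq_root:
  assumes P: "p \<in> P_set (Lambda a b n) (delta a b n)"
  shows "root_map n (seqp a n p) = p"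
proof -
  note hp = P_props[OF P]
  have thr: "throws (seqp a n p) (Suc i0) j = count p (Suc i0, Suc i0 + j)" if "i0 < n" "1 \<le> j" for i0 j
    using that Sst_split[of j a p i0] by (simp add: throws_def seqp_nth)
  have fin: "\<forall>i\<in>{1..n}. finite {j. 1 \<le> j \<and> throws (seqp a n p) i j \<noteq> 0}"
  proof
    fix i assume i: "i \<in> {1..n}"
    then obtain i0 where i0: "i = Suc i0" "i0 < n" by (cases i) auto
    have "{j. 1 \<le> j \<and> throws (seqp a n p) i j \<noteq> 0} \<subseteq> (\<lambda>x. snd x - i) ` set_mset p"
    proof
      fix j assume "j \<in> {j. 1 \<le> j \<and> throws (seqp a n p) i j \<noteq> 0}"
      then have "(i, i + j) \<in># p" using thr[of i0 j] i0 by (auto simp: count_eq_zero_iff)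
      then show "j \<in> (\<lambda>x. snd x - i) ` set_mset p" by force
    qed
    then show "finite {j. 1 \<le> j \<and> throws (seqp a n p) i j \<noteq> 0}" by (rule finite_subset) simp
  qed
  show ?thesis
  proof (rule multiset_eqI)
    fix x :: "nat \<times> nat"
    obtain i k where x: "x = (i,k)" by fastforce
    show "count (root_map n (seqp a n p)) x = count p x"
    proof (cases "1 \<le> i \<and> i \<le> n \<and> i < k")
      case True
      then obtain i0 where i0: "i = Suc i0" "i0 < n" by (cases i) auto
      show ?thesis using True thr[of i0 "k - i"] i0 unfolding x L_count[OF fin] by simp
    next
      case False
      then have "(i,k) \<notin># p" using hp[of "(i,k)"] by auto
      then show ?thesis using False unfolding x L_count[OF fin] by (auto simp: not_in_iff)
    qed
  qed
qed

lemma seq_in: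
  assumes P: "p \<in> P_set (Lambda a b n) (delta a b n)"
  shows "seqp a n p \<in> JS_nocap a b n"
proof -
  note hp = P_props[OF P]
  note rs = P_rs[OF P]
  have js: "juggling_state (Sst a p i)" for i
  proof -
    have "{k. Sst a p i k \<noteq> 0} \<subseteq> {..rp1 a b n}"
    proof
      fix k assume k: "k \<in> {k. Sst a p i k \<noteq> 0}"
      show "k \<in> {..rp1 a b n}"
      proof (rule ccontr)
        assume "k \<notin> {..rp1 a b n}"
        then have kk: "k > rp1 a b n" by simp
        then have "vec_state a (i+k) = 0" unfolding vec_state_def rp1_def by auto
        moreover have sz: "size {#x \<in># p. fst x \<le> i \<and> snd x = i+k#} = 0"
          using hp kk by (intro size_filter_zero) force
        ultimately have "Sst a p i k = 0" by (simp add: Sst_def sz)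
        then show False using k by simp
      qed
    qed
    then have "finite {k. Sst a p i k \<noteq> 0}" by (rule finite_subset) simp
    then show ?thesis unfolding juggling_state_def by (simp add: Sst_def)
  qed
  have s0: "Sst a p 0 = vec_state a"
  proof
    fix k
    have "size {#x \<in># p. fst x \<le> 0 \<and> snd x = 0+k#} = 0"
      using hp by (intro size_filter_zero) force
    then show "Sst a p 0 k = vec_state a k" unfolding Sst_def by (simp add: vec_state_def)
  qed
  have sn: "Sst a p n = vec_state b"
  proof
    fix k
    show "Sst a p n k = vec_state b k"
    proof (cases "k = 0")
      case True then show ?thesis by (simp add: Sst_def vec_state_def)
    next
      case False
      have z: "size {#x\<in>#p. fst x = n+k#} = 0"
        using hp False by (intro size_filter_zero) force
      have e: "{#x \<in># p. fst x \<le> n \<and> snd x = n+k#} = {#x \<in># p. snd x = n+k#}"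
        using hp by (intro filter_mset_cong) auto
      have "delta a b n (n+k) = vec_state a (n+k) - vec_state b k"
        using False unfolding delta_def by simp
      then show ?thesis using rs[of "n+k"] z e False unfolding Sst_def by simp
    qed
  qed
  have step: "js_step (Sst a p i) (Sst a p (Suc i))" if i: "i < n" for i
  proof -
    define c where "c = (\<lambda>j. count p (Suc i, Suc i + j))"
    have c0: "c 0 = 0" using hp[of "(Suc i, Suc i)"] by (auto simp: c_def not_in_iff[symmetric])
    have "{j. c j \<noteq> 0} \<subseteq> (\<lambda>x. snd x - Suc i) ` set_mset p"
    proof
      fix j assume "j \<in> {j. c j \<noteq> 0}"
      then have "(Suc i, Suc i + j) \<in># p" by (auto simp: c_def count_eq_zero_iff)
      then show "j \<in> (\<lambda>x. snd x - Suc i) ` set_mset p" by force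
    qed
    then have fc: "finite {j. c j \<noteq> 0}" by (rule finite_subset) simp
    have sz: "size {#x\<in>#p. fst x = Suc i#} = (\<Sum>j\<in>{j. c j \<noteq> 0}. c j)"
      unfolding c_def by (rule L_sz) (use hp in auto)
    have e: "{#x \<in># p. fst x \<le> i \<and> snd x = i+1#} = {#x \<in># p. snd x = Suc i#}"
      using hp by (intro filter_mset_cong) force+
    have "delta a b n (Suc i) = vec_state a (Suc i)" using i unfolding delta_def by simp
    then have sum: "int (\<Sum>j\<in>{j. c j \<noteq> 0}. c j) = Sst a p i 1"
      using rs[of "Suc i"] sz e unfolding Sst_def by simp
    have "\<forall>k\<ge>1. Sst a p (Suc i) k = Sst a p i (k + 1) + int (c k)"
      using Sst_split c_def by auto
    then show ?thesis unfolding js_step_def using c0 fc sum by blast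
  qed
  show ?thesis unfolding JS_nocap_def
    using js s0 sn step by (simp add: seqp_len seqp_nth)
qed

lemma step_props:
  assumes ss: "ss \<in> JS_nocap a b n" and i: "i < n"
  shows "throws ss (Suc i) 0 = 0 \<and> finite {k. throws ss (Suc i) k \<noteq> 0}
    \<and> int (\<Sum>k\<in>{k. throws ss (Suc i) k \<noteq> 0}. throws ss (Suc i) k) = (ss!i) 1
    \<and> (\<forall>k\<ge>1. (ss!Suc i) k = (ss!i) (k+1) + int (throws ss (Suc i) k))"
proof -
  have st: "js_step (ss!i) (ss!Suc i)" and jsS: "juggling_state (ss ! Suc i)"
    using ss i unfolding JS_nocap_def by auto
  obtain c where c: "c 0 = 0" "finite {k. c k \<noteq> 0}" "int (\<Sum>k\<in>{k. c k \<noteq> 0}. c k) = (ss!i) 1"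
    "\<forall>k\<ge>1. (ss!Suc i) k = (ss!i) (k + 1) + int (c k)"
    using st unfolding js_step_def by blast
  have "throws ss (Suc i) = c"
  proof
    fix k show "throws ss (Suc i) k = c k"
    proof (cases "k = 0")
      case True
      have "(ss ! Suc i) 0 = 0" using jsS unfolding juggling_state_def by simp
      moreover have "(ss!i) 1 \<ge> 0" using c(3) by linarith
      ultimately show ?thesis using True c(1) by (simp add: throws_def)
    next
      case False
      then show ?thesis using c(4) by (simp add: throws_def)
    qed
  qed
  then show ?thesis using c by simp
qed

lemma cnt_root:
  assumes ss: "ss \<in> JS_nocap a b n"
  shows "count (root_map n ss) (i,k) = (if 1 \<le> i \<and> i \<le> n \<and> i < k then throws ss i (k - i) else 0)"
proof -
  have "\<forall>i\<in>{1..n}. finite {j. 1 \<le> j \<and> throws ss i j \<noteq> 0}"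
  proof
    fix i assume "i \<in> {1..n}"
    then obtain i0 where "i = Suc i0" "i0 < n" by (cases i) auto
    then have "finite {j. throws ss i j \<noteq> 0}" using step_props[OF ss] by auto
    then show "finite {j. 1 \<le> j \<and> throws ss i j \<noteq> 0}" by (rule finite_subset[rotated]) auto
  qed
  then show ?thesis by (rule L_count)
qed

lemma root_props:
  assumes ss: "ss \<in> JS_nocap a b n" and x: "x \<in># root_map n ss"
  shows "1 \<le> fst x \<and> fst x \<le> n \<and> fst x < snd x"
proof -
  obtain i k where "x = (i,k)" by fastforce
  moreover have "count (root_map n ss) (i,k) > 0" using x calculation by simp
  ultimately show ?thesis using cnt_root[OF ss, of i k] by (auto split: if_splits)
qed

lemma closed:
  assumes ss: "ss \<in> JS_nocap a b n"
  shows "i \<le> n \<Longrightarrow> ss ! i = Sst a (root_map n ss) i"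
proof (induction i)
  case 0
  have "ss ! 0 = vec_state a" using ss unfolding JS_nocap_def by auto
  moreover have "Sst a (root_map n ss) 0 k = vec_state a k" for k
  proof -
    have "size {#x \<in># root_map n ss. fst x \<le> 0 \<and> snd x = 0+k#} = 0"
      using root_props[OF ss] by (intro size_filter_zero) force
    then show ?thesis unfolding Sst_def by (simp add: vec_state_def)
  qed
  ultimately show ?case by auto
next
  case (Suc i)
  then have i: "i < n" by simp
  have IH: "ss ! i = Sst a (root_map n ss) i" using Suc by simp
  show ?case
  proof
    fix k show "(ss ! Suc i) k = Sst a (root_map n ss) (Suc i) k"
    proof (cases "k = 0")
      case True
      have "juggling_state (ss ! Suc i)" using ss Suc.prems unfolding JS_nocap_def by auto
      then show ?thesis using True unfolding juggling_state_def Sst_def by simp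
    next
      case False
      have "(ss!Suc i) k = (ss!i) (k+1) + int (throws ss (Suc i) k)"
        using step_props[OF ss i] False by simp
      also have "\<dots> = Sst a (root_map n ss) i (k+1) + int (count (root_map n ss) (Suc i, Suc i + k))"
        using IH cnt_root[OF ss] i False by simp
      also have "\<dots> = Sst a (root_map n ss) (Suc i) k"
        using Sst_split[of k a "root_map n ss" i] False by simp
      finally show ?thesis .
    qed
  qed
qed

lemma seq_of_root:
  assumes ss: "ss \<in> JS_nocap a b n"
  shows "seqp a n (root_map n ss) = ss"
proof (rule nth_equalityI)
  show "length (seqp a n (root_map n ss)) = length ss" using ss by (simp add: seqp_len JS_nocap_def)
  fix i assume "i < length (seqp a n (root_map n ss))"
  then have "i \<le> n" by (simp add: seqp_len)
  then show "seqp a n (root_map n ss) ! i = ss ! i" using closed[OF ss] by (simp add: seqp_nth)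
qed

lemma root_in:
  assumes ss: "ss \<in> JS_nocap a b n"
  shows "root_map n ss \<in> P_set (Lambda a b n) (delta a b n)"
proof -
  define p where "p = root_map n ss"
  note rp = root_props[OF ss, folded p_def]
  have sn: "ss ! n = vec_state b" using ss unfolding JS_nocap_def by auto
  have cl: "\<And>i. i \<le> n \<Longrightarrow> ss ! i = Sst a p i" using closed[OF ss] p_def by simp
  have big: "int (size {#x\<in>#p. snd x = k#}) = vec_state b (k - n) - vec_state a k" if k: "n < k" for k
  proof -
    have e: "{#x \<in># p. fst x \<le> n \<and> snd x = n + (k-n)#} = {#x \<in># p. snd x = k#}"
      using rp k by (intro filter_mset_cong) auto
    have "vec_state b (k - n) = Sst a p n (k - n)" using cl[of n] sn by simp
    also have "\<dots> = vec_state a k + int (size {#x\<in>#p. snd x = k#})"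
      using e k unfolding Sst_def by simp
    finally show ?thesis by simp
  qed
  have sub: "set_mset p \<subseteq> Lambda a b n"
  proof
    fix x assume x: "x \<in># p"
    obtain i k where xik: "x = (i,k)" by fastforce
    have r: "1 \<le> i \<and> i \<le> n \<and> i < k" using rp[OF x] xik by simp
    have "k \<le> rp1 a b n"
    proof (rule ccontr)
      assume "\<not> k \<le> rp1 a b n"
      then have kk: "k > length a" "k > n + length b" unfolding rp1_def by auto
      have s0: "size {#x\<in>#p. snd x = k#} \<noteq> 0" using x xik by auto
      moreover have "vec_state b (k - n) = 0" "vec_state a k = 0" using kk unfolding vec_state_def by auto
      then have s1: "int (size {#x\<in>#p. snd x = k#}) = 0" using big[of k] kk by simp
      show False using s0 s1 by (simp only: of_nat_eq_0_iff)
    qed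
    then show "x \<in> Lambda a b n" using r xik unfolding Lambda_def by simp
  qed
  have rs: "root_sum p k = delta a b n k" for k
  proof (cases "k = 0")
    case True
    have z1: "size {#x\<in>#p. fst x = 0#} = 0" and z2: "size {#x\<in>#p. snd x = 0#} = 0"
      using rp by (auto intro!: size_filter_zero, fastforce+)
    show ?thesis unfolding True root_sum_def delta_def vec_state_def by (simp only: z1 z2) simp
  next
    case False
    show ?thesis
    proof (cases "k \<le> n")
      case True
      then obtain i0 where i0: "k = Suc i0" "i0 < n" using False by (cases k) auto
      note sp = step_props[OF ss i0(2)]
      have tc: "throws ss k = (\<lambda>j. count p (k, k+j))"
      proof
        fix j show "throws ss k j = count p (k, k + j)"
          using cnt_root[OF ss, of k "k+j"] sp i0 unfolding p_def by (cases "j = 0") auto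
      qed
      have "size {#x\<in>#p. fst x = k#} = (\<Sum>j\<in>{j. count p (k,k+j) \<noteq> 0}. count p (k,k+j))"
        by (rule L_sz) (use rp in auto)
      also have "\<dots> = (\<Sum>j\<in>{j. throws ss k j \<noteq> 0}. throws ss k j)" using tc by simp
      finally have "int (size {#x\<in>#p. fst x = k#}) = (ss!i0) 1" using sp i0 by simp
      also have "\<dots> = Sst a p i0 1" using cl i0 by simp
      also have "\<dots> = vec_state a k + int (size {#x\<in>#p. snd x = k#})"
      proof -
        have "{#x \<in># p. fst x \<le> i0 \<and> snd x = i0+1#} = {#x \<in># p. snd x = k#}"
          using rp i0 by (intro filter_mset_cong) force+
        then show ?thesis unfolding Sst_def using i0 by simp
      qed
      finally show ?thesis using True unfolding root_sum_def delta_def by simp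
    next
      case False
      have "size {#x\<in>#p. fst x = k#} = 0" using rp False by (intro size_filter_zero) force
      then show ?thesis using big[of k] False unfolding root_sum_def delta_def by simp
    qed
  qed
  show ?thesis unfolding P_set_def using sub rs p_def by auto
qed

lemma cap:
  assumes hp: "\<And>x. x \<in># p \<Longrightarrow> 1 \<le> fst x \<and> fst x \<le> n \<and> fst x < snd x"
  shows "(\<forall>i\<le>n. \<forall>k. Sst a p i k \<le> int m) \<longleftrightarrow>
         (\<forall>j\<ge>1. vec_state a j + int (size {#x\<in>#p. snd x = j#}) \<le> int m)"
proof
  assume A: "\<forall>i\<le>n. \<forall>k. Sst a p i k \<le> int m"
  show "\<forall>j\<ge>1. vec_state a j + int (size {#x\<in>#p. snd x = j#}) \<le> int m"
  proof (intro allI impI)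
    fix j :: nat assume j: "1 \<le> j"
    define i where "i = min (j - 1) n"
    have e: "{#x \<in># p. fst x \<le> i \<and> snd x = i + (j - i)#} = {#x \<in># p. snd x = j#}"
      using hp j unfolding i_def by (intro filter_mset_cong) force+
    have "Sst a p i (j - i) \<le> int m" using A i_def by simp
    then show "vec_state a j + int (size {#x\<in>#p. snd x = j#}) \<le> int m"
      using e j unfolding Sst_def i_def by (simp split: if_splits)
  qed
next
  assume B: "\<forall>j\<ge>1. vec_state a j + int (size {#x\<in>#p. snd x = j#}) \<le> int m"
  show "\<forall>i\<le>n. \<forall>k. Sst a p i k \<le> int m"
  proof (intro allI impI)
    fix i k :: nat
    show "Sst a p i k \<le> int m"
    proof (cases "k = 0")
      case True then show ?thesis by (simp add: Sst_def)
    next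
      case False
      have "{#x \<in># p. fst x \<le> i \<and> snd x = i + k#} = filter_mset (\<lambda>x. fst x \<le> i) {#x \<in># p. snd x = i+k#}"
        by (simp add: filter_filter_mset conj_commute)
      then have "size {#x \<in># p. fst x \<le> i \<and> snd x = i + k#} \<le> size {#x \<in># p. snd x = i+k#}"
        by (simp del: filter_filter_mset)
      then show ?thesis using B[rule_format, of "i+k"] False unfolding Sst_def by simp
    qed
  qed
qed

lemma JS_char: "JS a b n m = {ss \<in> JS_nocap a b n. \<forall>i\<le>n. \<forall>k. (ss ! i) k \<le> int m}"
  unfolding JS_def by simp

theorem mainTheorem7:
  fixes a b :: "int list" and n m :: nat
  assumes "sum_list a = sum_list b"
    and "0 < n" and "0 < m"
  shows "bij_betw (root_map n) (JS a b n m) (Q_set a b n m)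
       \<and> js a b n m = card (Q_set a b n m)
       \<and> js_nocap a b n = K_part (Lambda a b n) (delta a b n)"
proof -
  have b1: "bij_betw (root_map n) (JS_nocap a b n) (P_set (Lambda a b n) (delta a b n))"
    by (rule bij_betw_byWitness[where f'="seqp a n"])
       (auto simp: seq_of_root seq_root root_in seq_in)
  have capP: "(\<forall>i\<le>n. \<forall>k. Sst a p i k \<le> int m) \<longleftrightarrow> p \<in> Q_set a b n m"
    if P: "p \<in> P_set (Lambda a b n) (delta a b n)" for p
  proof -
    have "\<And>x. x \<in># p \<Longrightarrow> 1 \<le> fst x \<and> fst x \<le> n \<and> fst x < snd x"
      using P_props[OF P] by auto
    from cap[OF this, where a=a and m=m] show ?thesis using P unfolding Q_set_def by auto
  qed
  have b2: "bij_betw (root_map n) (JS a b n m) (Q_set a b n m)"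
  proof (rule bij_betw_byWitness[where f'="seqp a n"])
    show "\<forall>ss\<in>JS a b n m. seqp a n (root_map n ss) = ss"
      by (auto simp: JS_char seq_of_root)
    show "\<forall>p\<in>Q_set a b n m. root_map n (seqp a n p) = p"
      by (auto simp: Q_set_def seq_root)
    show "root_map n ` JS a b n m \<subseteq> Q_set a b n m"
    proof
      fix q assume "q \<in> root_map n ` JS a b n m"
      then obtain ss where ss: "ss \<in> JS a b n m" "q = root_map n ss" by auto
      have ssn: "ss \<in> JS_nocap a b n" using ss JS_char by auto
      have P: "q \<in> P_set (Lambda a b n) (delta a b n)" using root_in[OF ssn] ss by simp
      have "\<forall>i\<le>n. \<forall>k. Sst a q i k \<le> int m"
        using ss closed[OF ssn] unfolding JS_char by auto
      then show "q \<in> Q_set a b n m" using capP[OF P] by simp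
    qed
    show "seqp a n ` Q_set a b n m \<subseteq> JS a b n m"
    proof
      fix ss assume "ss \<in> seqp a n ` Q_set a b n m"
      then obtain p where p: "p \<in> Q_set a b n m" "ss = seqp a n p" by auto
      have P: "p \<in> P_set (Lambda a b n) (delta a b n)" using p unfolding Q_set_def by simp
      have "\<forall>i\<le>n. \<forall>k. Sst a p i k \<le> int m" using capP[OF P] p by simp
      then show "ss \<in> JS a b n m" using seq_in[OF P] p unfolding JS_char by (auto simp: seqp_nth)
    qed
  qed
  show ?thesis using b1 b2 bij_betw_same_card unfolding js_def js_nocap_def K_part_def by blast
qed

end
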